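(* Let $k\ge2$. For all $f:\Xi_k\to\mathbb R$, $\mathcal S_k\widehat{\mathcal L}_k(f\circ\Phi_k)=(L_kf)\circ\Phi_k$.
   Context: $V$ is a finite set with symmetric non-negative weights $c_{xy}=c_{yx}\ge0$, $\alpha=(\alpha_x)$ positive. $\Xi_k:=\{\eta\in\mathbb N_0^V:\sum_x\eta_x=k\}$, $\Phi_k(\mathbf x)=\sum_{i=1}^k\delta_{x_i}$ for $\mathbf x\in V^k$. $\mathcal S_k\varphi(\mathbf x)=\frac1{k!}\sum_{\sigma\in S_k}\varphi(x_{\sigma(1)},\dots,x_{\sigma(k)})$. $\widehat{\mathcal L}_k\varphi(\mathbf x)=\sum_{x,y}c_{xy}\sum_{i=1}^k\delta_{x,x_i}(\alpha_y+2\sum_{j=1}^{i-1}\delta_{y,x_j})(\varphi(\mathbf x_i^y)-\varphi(\mathbf x))$, with $\mathbf x_i^y$ being $\mathbf x$ with $i$-th coordinate replaced by $y$. $L_kf(\eta)=\sum_x\eta_x\sum_yc_{xy}(\alpha_y+\eta_y)(f(\eta-\delta_x+\delta_y)-f(\eta))$, where $\eta-\delta_x+\delta_y$ moves one particle from $x$ to $y$. *)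

theory Defs
  imports Complex_Main "HOL-Combinatorics.Permutations"
begin

text \<open>Particle configurations are functions eta :: 'v => nat; points of V^k are
lists of length k (index i of the paper corresponds to list index i-1).\<close>

definition Xi :: "nat \<Rightarrow> ('v::finite \<Rightarrow> nat) set" where
  "Xi k = {eta. (\<Sum>x\<in>UNIV. eta x) = k}"

definition Phi :: "nat \<Rightarrow> 'v list \<Rightarrow> ('v \<Rightarrow> nat)" where
  "Phi k xs = (\<lambda>z. \<Sum>i<k. if xs ! i = z then 1 else 0)"

definition Sym :: "nat \<Rightarrow> ('v list \<Rightarrow> real) \<Rightarrow> 'v list \<Rightarrow> real" where
  "Sym k \<phi> xs = (1 / fact k) *
     (\<Sum>\<sigma>\<in>{\<sigma>. \<sigma> permutes {..<k}}. \<phi> (map (\<lambda>i. xs ! \<sigma> i) [0..<k]))"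

definition Lhat :: "('v::finite \<Rightarrow> 'v \<Rightarrow> real) \<Rightarrow> ('v \<Rightarrow> real) \<Rightarrow> nat
    \<Rightarrow> ('v list \<Rightarrow> real) \<Rightarrow> 'v list \<Rightarrow> real" where
  "Lhat c \<alpha> k \<phi> xs = (\<Sum>x\<in>UNIV. \<Sum>y\<in>UNIV. c x y *
     (\<Sum>i<k. (if x = xs ! i then 1 else 0) *
        (\<alpha> y + 2 * (\<Sum>j<i. if y = xs ! j then 1 else 0)) *
        (\<phi> (xs[i := y]) - \<phi> xs)))"

definition move :: "('v \<Rightarrow> nat) \<Rightarrow> 'v \<Rightarrow> 'v \<Rightarrow> ('v \<Rightarrow> nat)" where
  "move eta x y = (\<lambda>z. eta z - (if z = x then 1 else 0) + (if z = y then 1 else 0))"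

definition Lk :: "('v::finite \<Rightarrow> 'v \<Rightarrow> real) \<Rightarrow> ('v \<Rightarrow> real)
    \<Rightarrow> (('v \<Rightarrow> nat) \<Rightarrow> real) \<Rightarrow> ('v \<Rightarrow> nat) \<Rightarrow> real" where
  "Lk c \<alpha> f eta = (\<Sum>x\<in>UNIV. real (eta x) * (\<Sum>y\<in>UNIV. c x y * (\<alpha> y + real (eta y)) *
       (f (move eta x y) - f eta)))"

end

theory Submission imports Defs begin

definition cntr :: "'v list \<Rightarrow> 'v \<Rightarrow> real" where
  "cntr ys y = (\<Sum>j<length ys. if y = ys ! j then 1 else 0)"

definition Npair :: "'v list \<Rightarrow> 'v \<Rightarrow> 'v \<Rightarrow> real" where
  "Npair ys x y = (\<Sum>i<length ys. (if x = ys ! i then 1 else 0) * (\<Sum>j<i. if y = ys ! j then 1 else 0))"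

lemma cntr_snoc: "cntr (ys @ [a]) y = cntr ys y + (if y = a then 1 else 0)"
  unfolding cntr_def by (simp add: nth_append)

lemma cntr_count: "cntr ys y = real (count_list ys y)"
  by (induction ys rule: rev_induct) (auto simp: cntr_snoc, simp add: cntr_def)

lemma Phi_count: "length ys = k \<Longrightarrow> Phi k ys z = count_list ys z"
proof -
  assume "length ys = k"
  have "real (Phi k ys z) = cntr ys z"
    unfolding Phi_def cntr_def using \<open>length ys = k\<close> by (simp add: of_nat_sum eq_commute of_bool_def[symmetric])
  thus ?thesis using cntr_count by (metis of_nat_eq_iff)
qed

lemma Npair_snoc: "Npair (ys @ [a]) x y = Npair ys x y + (if x = a then 1 else 0) * cntr ys y"
proof -
  have "Npair (ys @ [a]) x y = (\<Sum>i<Suc (length ys). (if x = (ys@[a]) ! i then 1 else 0) * (\<Sum>j<i. if y = (ys@[a]) ! j then 1 else 0))"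
    unfolding Npair_def by simp
  also have "\<dots> = Npair ys x y + (if x = a then 1 else 0) * cntr ys y"
    unfolding Npair_def cntr_def lessThan_Suc
    by (simp add: nth_append)
  finally show ?thesis .
qed

lemma Npair_cons: "Npair (a # ys) x y = Npair ys x y + (if y = a then 1 else 0) * cntr ys x"
proof -
  have "Npair (a # ys) x y = (\<Sum>i<Suc (length ys). (if x = (a#ys) ! i then 1 else 0) * (\<Sum>j<i. if y = (a#ys) ! j then 1 else 0))"
    unfolding Npair_def by simp
  also have "\<dots> = (\<Sum>i<length ys. (if x = ys ! i then 1 else 0) * ((if y = a then 1 else 0) + (\<Sum>j<i. if y = ys ! j then 1 else 0)))"
    unfolding sum.lessThan_Suc_shift by (simp add: sum.lessThan_Suc_shift del: sum.lessThan_Suc)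
  also have "\<dots> = Npair ys x y + (if y = a then 1 else 0) * cntr ys x"
    unfolding Npair_def cntr_def by (simp add: algebra_simps sum.distrib sum_distrib_left eq_commute)
  finally show ?thesis .
qed

lemma Npair_rev: "x \<noteq> y \<Longrightarrow> Npair ys x y + Npair (rev ys) x y = cntr ys x * cntr ys y"
proof (induction ys rule: rev_induct)
  case Nil thus ?case by (simp add: Npair_def cntr_def)
next
  case (snoc a ys)
  thus ?case by (simp add: Npair_snoc Npair_cons cntr_snoc cntr_count algebra_simps)
qed

lemma Phi_perm:
  assumes "\<sigma> permutes {..<k}" "length xs = k"
  shows "Phi k (map (\<lambda>i. xs ! \<sigma> i) [0..<k]) = Phi k xs"
proof
  fix z
  have "Phi k (map (\<lambda>i. xs ! \<sigma> i) [0..<k]) z = (\<Sum>i<k. (\<lambda>i. if xs ! i = z then 1 else 0) (\<sigma> i))"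
    unfolding Phi_def by (rule sum.cong) auto
  also have "\<dots> = (\<Sum>i<k. if xs ! i = z then 1 else 0)"
    using sum.permute[OF assms(1), of "\<lambda>i. if xs ! i = z then 1 else 0::nat"] by (simp add: comp_def)
  finally show "Phi k (map (\<lambda>i. xs ! \<sigma> i) [0..<k]) z = Phi k xs z" unfolding Phi_def .
qed

lemma Phi_upd:
  assumes "length ys = k" "i < k" "ys ! i = x"
  shows "Phi k (ys[i := y]) = move (Phi k ys) x y"
proof
  fix z
  have A: "Phi k ys z = (if x = z then 1 else 0) + (\<Sum>j\<in>{..<k}-{i}. if ys ! j = z then 1 else 0)"
    unfolding Phi_def using sum.remove[of "{..<k}" i "\<lambda>j. if ys ! j = z then 1 else 0::nat"] assms by auto
  have B: "Phi k (ys[i:=y]) z = (if y = z then 1 else 0) + (\<Sum>j\<in>{..<k}-{i}. if ys ! j = z then 1 else 0)"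
    unfolding Phi_def using sum.remove[of "{..<k}" i "\<lambda>j. if ys[i:=y] ! j = z then 1 else 0::nat"] assms
    by (auto intro!: sum.cong)
  show "Phi k (ys[i := y]) z = move (Phi k ys) x y z"
    unfolding move_def A B by auto
qed

lemma Lhat_eq:
  assumes "length ys = k"
  shows "Lhat c \<alpha> k (f \<circ> Phi k) ys = (\<Sum>x\<in>UNIV. \<Sum>y\<in>UNIV. c x y *
     (f (move (Phi k ys) x y) - f (Phi k ys)) * (\<alpha> y * real (Phi k ys x) + 2 * Npair ys x y))"
  unfolding Lhat_def
proof (rule sum.cong[OF refl], rule sum.cong[OF refl])
  fix x y
  let ?D = "f (move (Phi k ys) x y) - f (Phi k ys)"
  have "(\<Sum>i<k. (if x = ys ! i then 1 else 0) * (\<alpha> y + 2 * (\<Sum>j<i. if y = ys ! j then 1 else 0)) *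
        ((f \<circ> Phi k) (ys[i := y]) - (f \<circ> Phi k) ys))
     = (\<Sum>i<k. ?D * (\<alpha> y * (if x = ys ! i then 1 else 0) + 2 * ((if x = ys ! i then 1 else 0) * (\<Sum>j<i. if y = ys ! j then 1 else 0))))"
    using Phi_upd[OF assms] by (intro sum.cong) (auto simp: algebra_simps)
  also have "\<dots> = ?D * (\<alpha> y * real (Phi k ys x) + 2 * Npair ys x y)"
    unfolding Npair_def assms sum_distrib_left[symmetric] sum.distrib
    using cntr_count[of ys x] Phi_count[OF assms, of x] assms
    by (simp add: cntr_def)
  finally show "c x y * (\<Sum>i<k. (if x = ys ! i then 1 else 0) * (\<alpha> y + 2 * (\<Sum>j<i. if y = ys ! j then 1 else 0)) *
        ((f \<circ> Phi k) (ys[i := y]) - (f \<circ> Phi k) ys)) = c x y * ?D * (\<alpha> y * real (Phi k ys x) + 2 * Npair ys x y)"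
    by simp
qed

definition revp :: "nat \<Rightarrow> nat \<Rightarrow> nat" where
  "revp k = (\<lambda>i. if i < k then k - Suc i else i)"

lemma revp_invol: "revp k \<circ> revp k = id"
  by (auto simp: revp_def fun_eq_iff)

lemma revp_permutes: "revp k permutes {..<k}"
proof (rule bij_imp_permutes)
  show "bij_betw (revp k) {..<k} {..<k}"
    by (rule bij_betw_byWitness[where f'="revp k"]) (auto simp: revp_def)
  show "\<And>x. x \<notin> {..<k} \<Longrightarrow> revp k x = x" by (auto simp: revp_def)
qed

lemma map_revp: "map (\<lambda>i. xs ! (\<sigma> \<circ> revp k) i) [0..<k] = rev (map (\<lambda>i. xs ! \<sigma> i) [0..<k])"
  by (rule nth_equalityI) (auto simp: rev_nth revp_def)

lemma key_sum:
  assumes "length xs = k" "x \<noteq> y"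
  shows "2 * (\<Sum>\<sigma>\<in>{\<sigma>. \<sigma> permutes {..<k}}. Npair (map (\<lambda>i. xs ! \<sigma> i) [0..<k]) x y)
    = fact k * real (Phi k xs x) * real (Phi k xs y)"
proof -
  let ?P = "{\<sigma>. \<sigma> permutes {..<k}}"
  let ?ys = "\<lambda>\<sigma>. map (\<lambda>i. xs ! \<sigma> i) [0..<k]"
  have fin: "finite ?P" by (simp add: finite_permutations)
  have "(\<Sum>\<sigma>\<in>?P. Npair (?ys \<sigma>) x y) = (\<Sum>\<sigma>\<in>?P. Npair (?ys (\<sigma> \<circ> revp k)) x y)"
    by (rule sum.reindex_bij_witness[where i="\<lambda>\<sigma>. \<sigma> \<circ> revp k" and j="\<lambda>\<sigma>. \<sigma> \<circ> revp k"])
       (auto simp: comp_assoc revp_invol intro: permutes_compose[OF revp_permutes])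
  also have "\<dots> = (\<Sum>\<sigma>\<in>?P. Npair (rev (?ys \<sigma>)) x y)"
    using map_revp[of xs] by simp
  finally have "2 * (\<Sum>\<sigma>\<in>?P. Npair (?ys \<sigma>) x y) = (\<Sum>\<sigma>\<in>?P. Npair (?ys \<sigma>) x y + Npair (rev (?ys \<sigma>)) x y)"
    by (simp add: sum.distrib)
  also have "\<dots> = (\<Sum>\<sigma>\<in>?P. real (Phi k xs x) * real (Phi k xs y))"
  proof (rule sum.cong[OF refl])
    fix \<sigma> assume "\<sigma> \<in> ?P"
    hence "\<sigma> permutes {..<k}" by simp
    have L: "length (?ys \<sigma>) = k" by simp
    show "Npair (?ys \<sigma>) x y + Npair (rev (?ys \<sigma>)) x y = real (Phi k xs x) * real (Phi k xs y)"
      using Npair_rev[OF assms(2), of "?ys \<sigma>"] cntr_count[of "?ys \<sigma>"] Phi_count[OF L]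
        Phi_perm[OF \<open>\<sigma> permutes {..<k}\<close> assms(1)] by metis
  qed
  also have "\<dots> = fact k * real (Phi k xs x) * real (Phi k xs y)"
    by (simp add: card_permutations)
  finally show ?thesis .
qed

lemma key:
  assumes "length xs = k"
  shows "(f (move (Phi k xs) x y) - f (Phi k xs)) *
      (2 * (\<Sum>\<sigma>\<in>{\<sigma>. \<sigma> permutes {..<k}}. Npair (map (\<lambda>i. xs ! \<sigma> i) [0..<k]) x y))
    = (f (move (Phi k xs) x y) - f (Phi k xs)) * (fact k * real (Phi k xs x) * real (Phi k xs y))"
proof (cases "x = y")
  case False thus ?thesis using key_sum[OF assms] by simp
next
  case True
  show ?thesis
  proof (cases "Phi k xs x = 0")
    case False
    hence "move (Phi k xs) x y = Phi k xs" using True by (auto simp: move_def fun_eq_iff)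
    thus ?thesis by simp
  next
    case z: True
    have "Npair (map (\<lambda>i. xs ! \<sigma> i) [0..<k]) x y = 0" if "\<sigma> permutes {..<k}" for \<sigma>
    proof -
      let ?ys = "map (\<lambda>i. xs ! \<sigma> i) [0..<k]"
      have "count_list ?ys x = 0" using Phi_count[of ?ys k x] Phi_perm[OF that assms] z by simp
      hence "x \<notin> set ?ys" by (simp add: count_list_0_iff)
      hence "\<forall>i<length ?ys. x \<noteq> ?ys ! i" by (metis nth_mem)
      thus ?thesis unfolding Npair_def by (intro sum.neutral) auto
    qed
    thus ?thesis using z by simp
  qed
qed

theorem propositionA4:
  fixes c :: "'v::finite \<Rightarrow> 'v \<Rightarrow> real" and \<alpha> :: "'v \<Rightarrow> real"
    and k :: nat and f :: "('v \<Rightarrow> nat) \<Rightarrow> real" and xs :: "'v list"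
  assumes "\<And>x y. c x y = c y x" and "\<And>x y. c x y \<ge> 0" and "\<And>x. \<alpha> x > 0"
    and "k \<ge> 2" and "length xs = k"
  shows "Sym k (Lhat c \<alpha> k (f \<circ> Phi k)) xs = Lk c \<alpha> f (Phi k xs)"
proof -
  let ?P = "{\<sigma>. \<sigma> permutes {..<k}}"
  let ?ys = "\<lambda>\<sigma>. map (\<lambda>i. xs ! \<sigma> i) [0..<k]"
  let ?e = "Phi k xs"
  let ?D = "\<lambda>x y. f (move ?e x y) - f ?e"
  have "(\<Sum>\<sigma>\<in>?P. Lhat c \<alpha> k (f \<circ> Phi k) (?ys \<sigma>))
     = (\<Sum>\<sigma>\<in>?P. \<Sum>x\<in>UNIV. \<Sum>y\<in>UNIV. c x y * ?D x y * (\<alpha> y * real (?e x) + 2 * Npair (?ys \<sigma>) x y))"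
  proof (rule sum.cong[OF refl])
    fix \<sigma> assume "\<sigma> \<in> ?P"
    hence "Phi k (?ys \<sigma>) = ?e" using Phi_perm assms(5) by auto
    thus "Lhat c \<alpha> k (f \<circ> Phi k) (?ys \<sigma>) = (\<Sum>x\<in>UNIV. \<Sum>y\<in>UNIV. c x y * ?D x y * (\<alpha> y * real (?e x) + 2 * Npair (?ys \<sigma>) x y))"
      using Lhat_eq[of "?ys \<sigma>" k c \<alpha> f] by simp
  qed
  also have "\<dots> = (\<Sum>x\<in>UNIV. \<Sum>y\<in>UNIV. \<Sum>\<sigma>\<in>?P. c x y * ?D x y * (\<alpha> y * real (?e x) + 2 * Npair (?ys \<sigma>) x y))"
    by (subst sum.swap) (simp add: sum.swap[of _ ?P])
  also have "\<dots> = (\<Sum>x\<in>UNIV. \<Sum>y\<in>UNIV. c x y * (fact k * (?D x y * \<alpha> y * real (?e x)) + ?D x y * (2 * (\<Sum>\<sigma>\<in>?P. Npair (?ys \<sigma>) x y))))"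
  proof (intro sum.cong[OF refl])
    fix x y
    have "(\<Sum>\<sigma>\<in>?P. c x y * ?D x y * (\<alpha> y * real (?e x) + 2 * Npair (?ys \<sigma>) x y))
       = (\<Sum>\<sigma>\<in>?P. c x y * (?D x y * \<alpha> y * real (?e x)) + c x y * (?D x y * 2) * Npair (?ys \<sigma>) x y)"
      by (intro sum.cong) (auto simp: algebra_simps)
    also have "\<dots> = real (card ?P) * (c x y * (?D x y * \<alpha> y * real (?e x))) + c x y * (?D x y * 2) * (\<Sum>\<sigma>\<in>?P. Npair (?ys \<sigma>) x y)"
      by (simp add: sum.distrib sum_distrib_left)
    finally show "(\<Sum>\<sigma>\<in>?P. c x y * ?D x y * (\<alpha> y * real (?e x) + 2 * Npair (?ys \<sigma>) x y))
       = c x y * (fact k * (?D x y * \<alpha> y * real (?e x)) + ?D x y * (2 * (\<Sum>\<sigma>\<in>?P. Npair (?ys \<sigma>) x y)))"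
      by (simp add: card_permutations algebra_simps)
  qed
  also have "\<dots> = (\<Sum>x\<in>UNIV. \<Sum>y\<in>UNIV. fact k * (real (?e x) * (c x y * (\<alpha> y + real (?e y)) * ?D x y)))"
  proof (intro sum.cong[OF refl])
    fix x y
    show "c x y * (fact k * (?D x y * \<alpha> y * real (?e x)) + ?D x y * (2 * (\<Sum>\<sigma>\<in>?P. Npair (?ys \<sigma>) x y)))
      = fact k * (real (?e x) * (c x y * (\<alpha> y + real (?e y)) * ?D x y))"
      unfolding key[OF assms(5), of f x y] by (simp add: algebra_simps)
  qed
  finally show ?thesis
    unfolding Sym_def Lk_def by (simp add: sum_distrib_left[symmetric])
qed

end
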